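(* Let $\mathbb{H}\in\{\mathbb{R},\mathbb{C}\}$ and consider $\bm{y}=\bm{A}\bm{x}+\bm{w}$ with $\bm{A}\in\mathbb{H}^{m\times n}$ having i.i.d. entries $\mathcal{N}(0,1/m)$ (resp. $\mathcal{CN}(0,1/m)$), $\bm{x}\sim\mathcal{N}(\bm 0,\sigma_x^2\bm I)$ (resp. $\mathcal{CN}(\bm 0,\sigma_x^2\bm I)$), and $\bm{w}\sim\mathcal{N}(\bm 0,\sigma_w^2\bm I)$ (resp. $\mathcal{CN}(\bm 0,\sigma_w^2\bm I)$) with $\sigma_w^2=\delta\sigma_0^2$, where $\delta=m/n$ and $\sigma_0^2>0$ is constant. Let the asymptotic MSE of the MMSE estimator be $$\mathrm{Err}(\delta)=\frac{\delta}{2}\left[\left(-\sigma_w^2+c\sigma_x^2\right)+\sqrt{\left(\sigma_w^2+c\sigma_x^2\right)^2+4\sigma_w^2\sigma_x^2}\right],\qquad c=\frac{1-\delta}{\delta},\ \sigma_w^2=\delta\sigma_0^2,$$ and let $\delta^\dagger$ be the value of $\delta>0$ minimizing $\mathrm{Err}(\delta)$. Then $\delta^{\dagger}<2$. Moreover, if $\sigma_x^2<2\sigma_0^2$, then $\delta^{\dagger}<1$.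
   Context: $\delta=m/n$ is the normalized number of measurements; the asymptotic regime is $m,n\to\infty$ with $m/n\to\delta$, and the MSE is $\lim_{n\to\infty}\frac1n\mathbb{E}\|\bm x-\hat{\bm x}\|^2$. *)

theory Defs
  imports Complex_Main
begin

definition mmse_err :: "real \<Rightarrow> real \<Rightarrow> real \<Rightarrow> real" where
  "mmse_err sx2 s02 \<delta> =
     (let sw2 = \<delta> * s02; c = (1 - \<delta>) / \<delta> in
      \<delta> / 2 * ((- sw2 + c * sx2) + sqrt ((sw2 + c * sx2)\<^sup>2 + 4 * sw2 * sx2)))"

end

theory Submission
  imports Defs
begin

lemma err_eq:
  fixes x s t :: real
  assumes "t > 0"
  shows "mmse_err x s t = 1/2 * (- (t^2 * s) + (1 - t) * x
           + sqrt ((t^2 * s + (1 - t) * x)^2 + 4 * t^3 * s * x))"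
proof -
  have e: "t^2 * ((t * s + (1 - t) / t * x)^2 + 4 * (t * s) * x)
        = (t^2 * s + (1 - t) * x)^2 + 4 * t^3 * s * x"
    using assms by (simp add: field_simps power2_eq_square power3_eq_cube)
  have "t * sqrt ((t * s + (1 - t) / t * x)^2 + 4 * (t * s) * x)
        = sqrt ((t^2 * s + (1 - t) * x)^2 + 4 * t^3 * s * x)"
    using assms by (metis e real_sqrt_mult real_sqrt_abs power2_eq_square abs_of_pos)
  moreover have "t * (- (t*s) + (1 - t) / t * x) = - (t^2 * s) + (1 - t) * x"
    using assms by (simp add: field_simps power2_eq_square)
  ultimately show ?thesis unfolding mmse_err_def Let_def
    by (simp add: algebra_simps)
qed

lemma deriv_pos:
  fixes x s t :: real
  assumes x: "x > 0" and s: "s > 0" and t: "t \<ge> 1" and k: "2 * t^2 * s + (t - 2) * x > 0"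
  shows "\<exists>D. ((\<lambda>t. 1/2 * (- (t^2 * s) + (1 - t) * x
           + sqrt ((t^2 * s + (1 - t) * x)^2 + 4 * t^3 * s * x))) has_real_derivative D) (at t) \<and> D > 0"
proof -
  define a where "a = t^2 * s + (1 - t) * x"
  define Q where "Q = a^2 + 4 * t^3 * s * x"
  define L where "L = a * (2*t*s - x) + 6 * t^2 * s * x"
  have Qpos: "Q > 0" unfolding Q_def using x s t
    by (intro add_nonneg_pos) auto
  have Lid: "L = 2*t^3*s^2 + 3*t^2*s*x + 2*t*s*x + (t-1)*x^2"
    unfolding L_def a_def by (simp add: algebra_simps power2_eq_square power3_eq_cube)
  have Lpos: "L > 0" unfolding Lid using x s t
    by (intro add_pos_nonneg add_pos_pos) auto
  have key: "L^2 - (2*t*s+x)^2 * Q = 4*t*s*x * (x * (2*t^2*s + (t-2)*x))"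
    unfolding L_def Q_def a_def by (simp add: algebra_simps power2_eq_square power3_eq_cube)
  have "L^2 - (2*t*s+x)^2 * Q > 0" unfolding key using x s t k by simp
  hence "sqrt ((2*t*s+x)^2 * Q) < sqrt (L^2)" by (intro real_sqrt_less_mono) simp
  hence lt: "(2*t*s+x) * sqrt Q < L" using Lpos x s t
    by (simp add: real_sqrt_mult)
  define D where "D = 1/2 * (- 2*t*s - x + (2*L) / (2 * sqrt Q))"
  have dQ: "((\<lambda>t. (t^2 * s + (1 - t) * x)^2 + 4 * t^3 * s * x) has_real_derivative 2*L) (at t)"
  proof -
    have "((\<lambda>t. (t^2 * s + (1 - t) * x)^2 + 4 * t^3 * s * x) has_real_derivative
       2 * (t^2 * s + (1 - t) * x) * (2 * t * s - x) + 12 * t^2 * s * x) (at t)"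
      by (auto intro!: derivative_eq_intros simp: algebra_simps power2_eq_square)
    moreover have "2 * (t^2 * s + (1 - t) * x) * (2 * t * s - x) + 12 * t^2 * s * x = 2*L"
      unfolding L_def a_def by (simp add: algebra_simps)
    ultimately show ?thesis by simp
  qed
  have Qpos': "(t^2 * s + (1 - t) * x)^2 + 4 * t^3 * s * x > 0" using Qpos unfolding Q_def a_def .
  have dS: "((\<lambda>t. sqrt ((t^2 * s + (1 - t) * x)^2 + 4 * t^3 * s * x)) has_real_derivative (2*L) / (2 * sqrt Q)) (at t)"
  proof -
    have "((\<lambda>t. sqrt ((t^2 * s + (1 - t) * x)^2 + 4 * t^3 * s * x)) has_real_derivative
        inverse (sqrt ((t^2 * s + (1 - t) * x)^2 + 4 * t^3 * s * x)) / 2 * (2*L)) (at t)"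
      using DERIV_chain2[OF DERIV_real_sqrt[OF Qpos'] dQ] .
    moreover have "inverse (sqrt ((t^2 * s + (1 - t) * x)^2 + 4 * t^3 * s * x)) / 2 * (2*L) = (2*L) / (2 * sqrt Q)"
      unfolding Q_def a_def by (simp add: field_simps)
    ultimately show ?thesis by simp
  qed
  have dP: "((\<lambda>t. - (t^2 * s) + (1 - t) * x) has_real_derivative (- 2*t*s - x)) (at t)"
    by (auto intro!: derivative_eq_intros simp: algebra_simps power2_eq_square)
  have der: "((\<lambda>t. 1/2 * (- (t^2 * s) + (1 - t) * x
           + sqrt ((t^2 * s + (1 - t) * x)^2 + 4 * t^3 * s * x))) has_real_derivative D) (at t)"
    unfolding D_def by (intro DERIV_cmult DERIV_add dP dS)
  have sQ: "sqrt Q > 0" using Qpos by simp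
  have "(2*L) / (2 * sqrt Q) > 2*t*s + x"
    using lt sQ by (simp add: field_simps)
  hence "D > 0" unfolding D_def by simp
  with der show ?thesis by blast
qed

lemma not_min:
  fixes x s d :: real
  assumes x: "x > 0" and s: "s > 0" and t: "d \<ge> 1" and k: "2 * d^2 * s + (d - 2) * x > 0"
  shows "\<exists>e>0. mmse_err x s e < mmse_err x s d"
proof -
  define E where "E = (\<lambda>t. 1/2 * (- (t^2 * s) + (1 - t) * x
           + sqrt ((t^2 * s + (1 - t) * x)^2 + 4 * t^3 * s * x)))"
  obtain D where D: "(E has_real_derivative D) (at d)" "D > 0"
    using deriv_pos[OF x s t k] unfolding E_def by blast
  obtain h0 where h0: "h0 > 0" "\<And>h. h > 0 \<Longrightarrow> h < h0 \<Longrightarrow> E (d - h) < E d"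
    using DERIV_pos_inc_left[OF D] by blast
  define h where "h = min (h0/2) (1/2)"
  have hp: "h > 0" "h < h0" "h < d" using h0 t unfolding h_def by auto
  have "E (d - h) < E d" using h0(2) hp by blast
  moreover have "mmse_err x s (d - h) = E (d - h)" "mmse_err x s d = E d"
    unfolding E_def using hp t err_eq[of "d - h" x s] err_eq[of d x s] by auto
  ultimately show ?thesis using hp by (intro exI[of _ "d - h"]) auto
qed

theorem proposition1:
  fixes sx2 s02 d :: real
  assumes "sx2 > 0" and "s02 > 0"
    and "d > 0"
    and "\<forall>\<delta>>0. mmse_err sx2 s02 d \<le> mmse_err sx2 s02 \<delta>"
  shows "d < 2 \<and> (sx2 < 2 * s02 \<longrightarrow> d < 1)"
proof -
  have A: False if "d \<ge> 1" "2 * d^2 * s02 + (d - 2) * sx2 > 0"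
    using not_min[OF assms(1,2) that] assms(4) by force
  have B: "d < 2"
  proof (rule ccontr)
    assume "\<not> d < 2"
    hence "2 * d^2 * s02 > 0" "(d - 2) * sx2 \<ge> 0" using assms by auto
    hence "2 * d^2 * s02 + (d - 2) * sx2 > 0" by linarith
    thus False using A \<open>\<not> d < 2\<close> by simp
  qed
  have C: "d < 1" if "sx2 < 2 * s02"
  proof (rule ccontr)
    assume n: "\<not> d < 1"
    have "d^2 \<ge> 1" using n by (simp add: one_le_power)
    hence "2 * d^2 * s02 \<ge> 2 * s02" using assms by simp
    moreover have "(d - 2) * sx2 \<ge> - sx2" using n assms by (simp add: algebra_simps)
    ultimately have "2 * d^2 * s02 + (d - 2) * sx2 > 0" using that by linarith
    thus False using A n by simp
  qed
  show ?thesis using B C by blast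
qed

end
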